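(* Let $X$ be a nonempty open bounded subset of $\mathbb{R}^n$. Suppose a sequence $(F_k)_k$ in $C_{cm}(X,\mathbb{R}^n)$ converges (for the metric $s$) to $F\in C_{cm}(X,\mathbb{R}^n)$, a sequence of points $x_k\in X$ converges to $x\in X$, a sequence of vectors $\eta_k\in\mathbb{R}^n$ converges to $\eta\in\mathbb{R}^n$, and $\eta_k\in F_k(x_k)$ for every $k$. Then $\eta\in F(x)$. The same holds with $C_{cm}(X,\mathbb{R}^n)$ and $s$ replaced by $C_{ae}(X,\mathbb{R}^n)$ and $r$.
   Context: Comeager = complement is a countable union of nowhere dense subsets of $X$. $C_{cm}(X,\mathbb{R}^m)$: classes of bounded maps $X\to\mathbb{R}^m$ continuous on a comeager set, modulo coincidence on a comeager set; $C_{ae}(X,\mathbb{R}^m)$: classes of bounded maps continuous a.e., modulo coincidence a.e. For $\xi\in\mathbb{R}^m$, $\langle f(\cdot),\xi\rangle$ is the real class of $x\mapsto\langle\varphi(x),\xi\rangle$. For real classes and $k\in\mathbb{N}$: $f_k^-=\sup\{\varphi\in Lip_k(X,\mathbb{R}):\varphi\le f\}$, $f_k^+=\inf\{\varphi\in Lip_k(X,\mathbb{R}):\varphi\ge f\}$; $h(\varphi,\psi)$ is the Hausdorff distance of closures of graphs in $\mathrm{cl}X\times\mathbb{R}$ of bounded continuous functions, $\delta=h+\int_X|\varphi-\psi|dx$; $s(f,g)=\sup_k\max\{h(f_k^-,g_k^-),h(f_k^+,g_k^+)\}$, $r(f,g)=\sup_k\max\{\delta(f_k^-,g_k^-),\delta(f_k^+,g_k^+)\}$;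 for vector classes $s(f,g)=\sup_{\|\xi\|=1}s(\langle f,\xi\rangle,\langle g,\xi\rangle)$ and likewise $r$. The value of a class $f$ at $x$ is $f(x)=\bigcap_{\varepsilon>0}\overline{\mathrm{co}}\{\varphi(y):y\in B(x,\varepsilon)\cap C_\varphi\}$ for a representative $\varphi$ with continuity set $C_\varphi$ (independent of $\varphi$). *)

theory Defs
  imports "HOL-Analysis.Analysis"
begin

definition nowhere_dense :: "'a::topological_space set \<Rightarrow> bool" where
  "nowhere_dense S \<longleftrightarrow> interior (closure S) = {}"

definition cm_small :: "'a::topological_space set \<Rightarrow> 'a set \<Rightarrow> bool" where
  "cm_small X S \<longleftrightarrow>
     (\<exists>N :: nat \<Rightarrow> 'a set. (\<forall>i. N i \<subseteq> X \<and> nowhere_dense (N i)) \<and> S = (\<Union>i. N i))"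

definition ae_small :: "'a::euclidean_space set \<Rightarrow> 'a set \<Rightarrow> bool" where
  "ae_small X S \<longleftrightarrow> S \<subseteq> X \<and> S \<in> null_sets lebesgue"

definition comeager :: "'a::topological_space set \<Rightarrow> 'a set \<Rightarrow> bool" where
  "comeager X C \<longleftrightarrow> C \<subseteq> X \<and> cm_small X (X - C)"

definition cont_set :: "'a::t2_space set \<Rightarrow> ('a \<Rightarrow> 'b::topological_space) \<Rightarrow> 'a set" where
  "cont_set X \<phi> = {x \<in> X. continuous (at x within X) \<phi>}"

text \<open>A representative of a class of \<open>C_cm(X,R^m)\<close>: bounded on X, continuous on a comeager set.\<close>
definition in_Ccm :: "'a::euclidean_space set \<Rightarrow> ('a \<Rightarrow> 'b::real_normed_vector) \<Rightarrow> bool" where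
  "in_Ccm X \<phi> \<longleftrightarrow> bounded (\<phi> ` X) \<and> comeager X (cont_set X \<phi>)"

text \<open>A representative of a class of \<open>C_ae(X,R^m)\<close>: bounded on X, continuous a.e. on X.\<close>
definition in_Cae :: "'a::euclidean_space set \<Rightarrow> ('a \<Rightarrow> 'b::real_normed_vector) \<Rightarrow> bool" where
  "in_Cae X \<phi> \<longleftrightarrow> bounded (\<phi> ` X) \<and> ae_small X (X - cont_set X \<phi>)"

text \<open>\<open>\<phi> \<le> f\<close> as classes: the set where it fails is small.\<close>
definition cls_le :: "('a set \<Rightarrow> 'a set \<Rightarrow> bool) \<Rightarrow> 'a set \<Rightarrow> ('a \<Rightarrow> real) \<Rightarrow> ('a \<Rightarrow> real) \<Rightarrow> bool" where
  "cls_le small X \<phi> f \<longleftrightarrow> small X {x \<in> X. \<not> \<phi> x \<le> f x}"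

definition lower_env :: "('a::metric_space set \<Rightarrow> 'a set \<Rightarrow> bool) \<Rightarrow> 'a set \<Rightarrow> nat \<Rightarrow> ('a \<Rightarrow> real) \<Rightarrow> 'a \<Rightarrow> real" where
  "lower_env small X k f x =
     Sup {\<phi> x | \<phi>. (real k)-lipschitz_on X \<phi> \<and> cls_le small X \<phi> f}"

definition upper_env :: "('a::metric_space set \<Rightarrow> 'a set \<Rightarrow> bool) \<Rightarrow> 'a set \<Rightarrow> nat \<Rightarrow> ('a \<Rightarrow> real) \<Rightarrow> 'a \<Rightarrow> real" where
  "upper_env small X k f x =
     Inf {\<phi> x | \<phi>. (real k)-lipschitz_on X \<phi> \<and> cls_le small X f \<phi>}"

definition hausdist :: "'a::metric_space set \<Rightarrow> 'a set \<Rightarrow> real" where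
  "hausdist S T = max (SUP x\<in>S. infdist x T) (SUP y\<in>T. infdist y S)"

definition graph_cl :: "'a::euclidean_space set \<Rightarrow> ('a \<Rightarrow> real) \<Rightarrow> ('a \<times> real) set" where
  "graph_cl X \<phi> = closure ((\<lambda>x. (x, \<phi> x)) ` X)"

definition hd :: "'a::euclidean_space set \<Rightarrow> ('a \<Rightarrow> real) \<Rightarrow> ('a \<Rightarrow> real) \<Rightarrow> real" where
  "hd X \<phi> \<psi> = hausdist (graph_cl X \<phi>) (graph_cl X \<psi>)"

definition dlt :: "'a::euclidean_space set \<Rightarrow> ('a \<Rightarrow> real) \<Rightarrow> ('a \<Rightarrow> real) \<Rightarrow> real" where
  "dlt X \<phi> \<psi> = hd X \<phi> \<psi> + (LINT x:X|lebesgue. \<bar>\<phi> x - \<psi> x\<bar>)"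

definition s_real :: "'a::euclidean_space set \<Rightarrow> ('a \<Rightarrow> real) \<Rightarrow> ('a \<Rightarrow> real) \<Rightarrow> real" where
  "s_real X f g = (SUP k\<in>{1::nat..}.
      max (hd X (lower_env cm_small X k f) (lower_env cm_small X k g))
          (hd X (upper_env cm_small X k f) (upper_env cm_small X k g)))"

definition r_real :: "'a::euclidean_space set \<Rightarrow> ('a \<Rightarrow> real) \<Rightarrow> ('a \<Rightarrow> real) \<Rightarrow> real" where
  "r_real X f g = (SUP k\<in>{1::nat..}.
      max (dlt X (lower_env ae_small X k f) (lower_env ae_small X k g))
          (dlt X (upper_env ae_small X k f) (upper_env ae_small X k g)))"

definition s_vec :: "'a::euclidean_space set \<Rightarrow> ('a \<Rightarrow> 'b::euclidean_space) \<Rightarrow> ('a \<Rightarrow> 'b) \<Rightarrow> real" where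
  "s_vec X F G = (SUP \<xi>\<in>sphere (0::'b) 1. s_real X (\<lambda>x. F x \<bullet> \<xi>) (\<lambda>x. G x \<bullet> \<xi>))"

definition r_vec :: "'a::euclidean_space set \<Rightarrow> ('a \<Rightarrow> 'b::euclidean_space) \<Rightarrow> ('a \<Rightarrow> 'b) \<Rightarrow> real" where
  "r_vec X F G = (SUP \<xi>\<in>sphere (0::'b) 1. r_real X (\<lambda>x. F x \<bullet> \<xi>) (\<lambda>x. G x \<bullet> \<xi>))"

definition cls_value :: "'a::euclidean_space set \<Rightarrow> ('a \<Rightarrow> 'b::euclidean_space) \<Rightarrow> 'a \<Rightarrow> 'b set" where
  "cls_value X \<phi> x = (\<Inter>\<epsilon>\<in>{0<..}. closure (convex hull (\<phi> ` (ball x \<epsilon> \<inter> cont_set X \<phi>))))"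

end

theory Submission
  imports Defs
begin

definition good_small :: "('a::euclidean_space set \<Rightarrow> 'a set \<Rightarrow> bool) \<Rightarrow> 'a set \<Rightarrow> bool" where
 "good_small small X \<longleftrightarrow> small X {} \<and> (\<forall>A B. small X A \<longrightarrow> B \<subseteq> A \<longrightarrow> small X B)
    \<and> (\<forall>A U. small X A \<longrightarrow> open U \<longrightarrow> U \<subseteq> X \<longrightarrow> U \<noteq> {} \<longrightarrow> \<not> U \<subseteq> A)"

lemma good_cm: "good_small cm_small (X::'a::euclidean_space set)"
proof -
  have s0: "cm_small X {}"
    unfolding cm_small_def nowhere_dense_def by (intro exI[of _ "\<lambda>i. {}"]) simp
  have s2: "cm_small X B" if hA: "cm_small X A" and hB: "B \<subseteq> A" for A B
  proof -
    obtain N :: "nat \<Rightarrow> 'a set" where N0: "(\<forall>i. N i \<subseteq> X \<and> nowhere_dense (N i)) \<and> A = (\<Union>i. N i)"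
      using hA unfolding cm_small_def by (elim exE) (rule that)
    have N: "\<And>i. N i \<subseteq> X" "\<And>i. nowhere_dense (N i)" "A = (\<Union>i. N i)" using N0 by auto
    have "nowhere_dense (N i \<inter> B)" for i
    proof -
      have "interior (closure (N i \<inter> B)) \<subseteq> interior (closure (N i))"
        by (intro interior_mono closure_mono) auto
      then show ?thesis using N(2)[of i] by (auto simp: nowhere_dense_def)
    qed
    moreover have "B = (\<Union>i. N i \<inter> B)" using hB N(3) by auto
    moreover have "N i \<inter> B \<subseteq> X" for i using N(1)[of i] by blast
    ultimately show ?thesis unfolding cm_small_def
      by (intro exI[of _ "\<lambda>i. N i \<inter> B"]) blast
  qed
  have s3: "\<not> U \<subseteq> A" if hA: "cm_small X A" and "open U" "U \<noteq> {}" for A U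
  proof
    assume UA: "U \<subseteq> A"
    obtain N :: "nat \<Rightarrow> 'a set" where N0: "(\<forall>i. N i \<subseteq> X \<and> nowhere_dense (N i)) \<and> A = (\<Union>i. N i)"
      using hA unfolding cm_small_def by (elim exE) (rule that)
    have N: "\<And>i. N i \<subseteq> X" "\<And>i. nowhere_dense (N i)" "A = (\<Union>i. N i)" using N0 by auto
    let ?G = "range (\<lambda>i. - closure (N i))"
    have "(UNIV::'a set) \<subseteq> closure (\<Inter>?G)"
    proof (rule Baire)
      fix T assume "T \<in> ?G"
      then obtain i where T: "T = - closure (N i)" by auto
      have "closure T = UNIV"
        using N(2)[of i] unfolding T closure_complement nowhere_dense_def by simp
      then show "openin (top_of_set UNIV) T \<and> UNIV \<subseteq> closure T"
        using T by auto
    qed auto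
    then have "U \<inter> closure (\<Inter>?G) \<noteq> {}" using \<open>U \<noteq> {}\<close> by auto
    then have "U \<inter> (\<Inter>?G) \<noteq> {}" using open_Int_closure_eq_empty[OF \<open>open U\<close>] by blast
    then obtain z where "z \<in> U" "\<And>i. z \<notin> closure (N i)" by auto
    then show False using UA N(3) closure_subset by blast
  qed
  show ?thesis unfolding good_small_def
  proof (intro conjI allI impI)
    show "cm_small X {}" by (rule s0)
    show "cm_small X B" if "cm_small X A" "B \<subseteq> A" for A B using s2 that by metis
    show "\<not> U \<subseteq> A" if "cm_small X A" "open U" "U \<subseteq> X" "U \<noteq> {}" for A U
      using s3 that by metis
  qed
qed

lemma good_ae: "good_small ae_small (X::'a::euclidean_space set)"
proof -
  have s2: "ae_small X B" if "ae_small X A" "B \<subseteq> A" for A B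
  proof -
    have a: "A \<subseteq> X" "A \<in> null_sets lebesgue" using that(1) unfolding ae_small_def by auto
    have "B \<in> null_sets lebesgue" by (rule null_sets_completion_subset[OF that(2) a(2)])
    then show ?thesis using a(1) that(2) unfolding ae_small_def by auto
  qed
  have s3: "\<not> U \<subseteq> A" if "ae_small X A" "open U" "U \<noteq> {}" for A U
  proof
    assume "U \<subseteq> A"
    then have "U \<in> null_sets lebesgue" using that(1) null_sets_completion_subset[of U A] unfolding ae_small_def
      by blast
    then show False using open_not_negligible[OF that(2,3)] negligible_iff_null_sets by blast
  qed
  have s0: "ae_small X {}" by (simp add: ae_small_def)
  show ?thesis unfolding good_small_def using s0 s2 s3 by blast
qed

lemma gs_s3: "good_small small X \<Longrightarrow> small X A \<Longrightarrow> U \<subseteq> X \<Longrightarrow> U \<noteq> {} \<Longrightarrow> open U \<Longrightarrow> \<not> U \<subseteq> A"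
  unfolding good_small_def by blast

lemma maj_lower:
  fixes f \<psi> :: "'a::euclidean_space \<Rightarrow> real"
  assumes gs: "good_small small X" and X: "open X" and fb: "\<forall>z\<in>X. \<bar>f z\<bar> \<le> M"
    and lip: "(real k)-lipschitz_on X \<psi>" and cl: "cls_le small X f \<psi>" and y: "y \<in> X"
  shows "- M \<le> \<psi> y"
proof (rule ccontr)
  assume "\<not> - M \<le> \<psi> y"
  define \<delta> where "\<delta> = (- M - \<psi> y) / (real k + 1)"
  have d0: "\<delta> > 0" using \<open>\<not> - M \<le> \<psi> y\<close> by (simp add: \<delta>_def)
  obtain r where r: "r > 0" "ball y r \<subseteq> X" using X y open_contains_ball by blast
  let ?U = "ball y (min r \<delta>)"
  have "?U \<subseteq> {z \<in> X. \<not> f z \<le> \<psi> z}"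
  proof
    fix z assume z: "z \<in> ?U"
    then have zX: "z \<in> X" using r by auto
    have dz: "dist y z < \<delta>" using z by simp
    have "dist (\<psi> z) (\<psi> y) \<le> real k * dist z y" using lipschitz_onD[OF lip zX y] .
    then have "\<psi> z \<le> \<psi> y + real k * dist y z" by (simp add: dist_real_def dist_commute)
    also have "real k * dist y z \<le> real k * \<delta>" using dz by (intro mult_left_mono) auto
    also have "\<psi> y + real k * \<delta> < \<psi> y + (real k + 1) * \<delta>" using d0 by (simp add: algebra_simps)
    also have "\<psi> y + (real k + 1) * \<delta> = - M" by (simp add: \<delta>_def)
    also have "- M \<le> f z" using fb zX by auto
    finally show "z \<in> {z \<in> X. \<not> f z \<le> \<psi> z}" using zX by auto
  qed
  moreover have "small X {z \<in> X. \<not> f z \<le> \<psi> z}" using cl unfolding cls_le_def .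
  moreover have "?U \<subseteq> X" using r by auto
  moreover have "?U \<noteq> {}" using r d0 by simp
  ultimately show False using gs_s3[OF gs] by blast
qed

lemma maj_cont:
  fixes f \<psi> :: "'a::euclidean_space \<Rightarrow> real"
  assumes gs: "good_small small X" and X: "open X"
    and lip: "(real k)-lipschitz_on X \<psi>" and cl: "cls_le small X f \<psi>" and w: "w \<in> X"
    and fc: "continuous (at w within X) f"
  shows "f w \<le> \<psi> w"
proof (rule ccontr)
  assume "\<not> f w \<le> \<psi> w"
  let ?g = "\<lambda>z. f z - \<psi> z"
  have "continuous (at w within X) ?g"
    using fc lipschitz_on_continuous_within[OF lip w] by (intro continuous_intros)
  then obtain d where d: "d > 0" "\<forall>z\<in>X. dist z w < d \<longrightarrow> dist (?g z) (?g w) < ?g w"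
    using \<open>\<not> f w \<le> \<psi> w\<close> unfolding continuous_within_eps_delta by (meson not_le diff_gt_0_iff_gt)
  obtain r where r: "r > 0" "ball w r \<subseteq> X" using X w open_contains_ball by blast
  let ?U = "ball w (min r d)"
  have "?U \<subseteq> {z \<in> X. \<not> f z \<le> \<psi> z}"
  proof
    fix z assume z: "z \<in> ?U"
    then have zX: "z \<in> X" using r by auto
    have "dist z w < d" using z by (simp add: dist_commute)
    then have "dist (?g z) (?g w) < ?g w" using d zX by auto
    then have "?g z > 0" by (simp add: dist_real_def)
    then show "z \<in> {z \<in> X. \<not> f z \<le> \<psi> z}" using zX by auto
  qed
  moreover have "small X {z \<in> X. \<not> f z \<le> \<psi> z}" using cl unfolding cls_le_def .
  moreover have "?U \<subseteq> X" using r by auto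
  moreover have "?U \<noteq> {}" using r d by simp
  ultimately show False using gs_s3[OF gs] by blast
qed

lemma env_props:
  fixes f :: "'a::euclidean_space \<Rightarrow> real"
  assumes gs: "good_small small X" and X: "open X" and fb: "\<forall>z\<in>X. \<bar>f z\<bar> \<le> M"
  shows "\<And>y. y \<in> X \<Longrightarrow> \<bar>upper_env small X k f y\<bar> \<le> M"
    and "(real k)-lipschitz_on X (upper_env small X k f)"
    and "\<And>\<psi> y. (real k)-lipschitz_on X \<psi> \<Longrightarrow> cls_le small X f \<psi> \<Longrightarrow> y \<in> X \<Longrightarrow> upper_env small X k f y \<le> \<psi> y"
    and "\<And>y c. y \<in> X \<Longrightarrow> (\<And>\<psi>. (real k)-lipschitz_on X \<psi> \<Longrightarrow> cls_le small X f \<psi> \<Longrightarrow> c \<le> \<psi> y) \<Longrightarrow> c \<le> upper_env small X k f y"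
proof -
  let ?S = "\<lambda>y. {\<psi> y | \<psi>. (real k)-lipschitz_on X \<psi> \<and> cls_le small X f \<psi>}"
  have cM: "(real k)-lipschitz_on X (\<lambda>_. M) \<and> cls_le small X f (\<lambda>_. M)"
  proof
    show "(real k)-lipschitz_on X (\<lambda>_. M)" by (auto simp: lipschitz_on_def)
    have e: "{z \<in> X. \<not> f z \<le> M} = {}" using fb by auto
    have "small X {}" using gs unfolding good_small_def by blast
    then show "cls_le small X f (\<lambda>_. M)" by (simp only: cls_le_def e)
  qed
  have ne: "?S y \<noteq> {}" for y using cM by blast
  have bb: "bdd_below (?S y)" if "y \<in> X" for y
    using maj_lower[OF gs X fb _ _ that] by (auto intro!: bdd_belowI[of _ "-M"])
  have low: "upper_env small X k f y \<le> \<psi> y" if "(real k)-lipschitz_on X \<psi>" "cls_le small X f \<psi>" "y \<in> X" for \<psi> y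
    unfolding upper_env_def using that bb[OF that(3)] by (intro cInf_lower) auto
  have gr: "c \<le> upper_env small X k f y" if "y \<in> X" "\<And>\<psi>. (real k)-lipschitz_on X \<psi> \<Longrightarrow> cls_le small X f \<psi> \<Longrightarrow> c \<le> \<psi> y" for y c
    unfolding upper_env_def using that ne by (intro cInf_greatest) auto
  show "\<And>\<psi> y. (real k)-lipschitz_on X \<psi> \<Longrightarrow> cls_le small X f \<psi> \<Longrightarrow> y \<in> X \<Longrightarrow> upper_env small X k f y \<le> \<psi> y"
    using low by blast
  show "\<And>y c. y \<in> X \<Longrightarrow> (\<And>\<psi>. (real k)-lipschitz_on X \<psi> \<Longrightarrow> cls_le small X f \<psi> \<Longrightarrow> c \<le> \<psi> y) \<Longrightarrow> c \<le> upper_env small X k f y"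
    using gr by blast
  show "\<bar>upper_env small X k f y\<bar> \<le> M" if "y \<in> X" for y
  proof -
    have "upper_env small X k f y \<le> M" using low[of "\<lambda>_. M"] cM that by auto
    moreover have "- M \<le> upper_env small X k f y"
      using gr[OF that] maj_lower[OF gs X fb _ _ that] by blast
    ultimately show ?thesis by auto
  qed
  have one: "upper_env small X k f y \<le> upper_env small X k f z + real k * dist y z" if "y \<in> X" "z \<in> X" for y z
  proof -
    have "upper_env small X k f y - real k * dist y z \<le> upper_env small X k f z"
    proof (rule gr[OF that(2)])
      fix \<psi> assume a: "(real k)-lipschitz_on X \<psi>" "cls_le small X f \<psi>"
      have "dist (\<psi> y) (\<psi> z) \<le> real k * dist y z" using lipschitz_onD[OF a(1) that] .
      then have "\<psi> y \<le> \<psi> z + real k * dist y z" by (simp add: dist_real_def)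
      then show "upper_env small X k f y - real k * dist y z \<le> \<psi> z"
        using low[OF a that(1)] by linarith
    qed
    then show ?thesis by simp
  qed
  show "(real k)-lipschitz_on X (upper_env small X k f)"
    unfolding lipschitz_on_def
  proof (intro conjI ballI)
    fix y z assume "y \<in> X" "z \<in> X"
    then show "dist (upper_env small X k f y) (upper_env small X k f z) \<le> real k * dist y z"
      using one[of y z] one[of z y] by (simp add: dist_real_def dist_commute abs_le_iff)
  qed simp
qed

lemma lower_env_neg:
  "lower_env small X k f y = - upper_env small X k (\<lambda>x. - f x) y"
proof -
  have "{\<phi> y | \<phi>. (real k)-lipschitz_on X \<phi> \<and> cls_le small X \<phi> f}
      = uminus ` {\<psi> y | \<psi>. (real k)-lipschitz_on X \<psi> \<and> cls_le small X (\<lambda>x. - f x) \<psi>}"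
  proof (intro equalityI subsetI)
    fix t assume "t \<in> {\<phi> y | \<phi>. (real k)-lipschitz_on X \<phi> \<and> cls_le small X \<phi> f}"
    then obtain \<phi> where p: "t = \<phi> y" "(real k)-lipschitz_on X \<phi>" "cls_le small X \<phi> f" by auto
    have "(real k)-lipschitz_on X (\<lambda>x. - \<phi> x)" using p(2) by (auto simp: lipschitz_on_def dist_real_def)
    moreover have "cls_le small X (\<lambda>x. - f x) (\<lambda>x. - \<phi> x)" using p(3) by (simp add: cls_le_def)
    ultimately show "t \<in> uminus ` {\<psi> y | \<psi>. (real k)-lipschitz_on X \<psi> \<and> cls_le small X (\<lambda>x. - f x) \<psi>}"
      using p(1) by (intro image_eqI[of _ _ "- t"]) auto
  next
    fix t assume "t \<in> uminus ` {\<psi> y | \<psi>. (real k)-lipschitz_on X \<psi> \<and> cls_le small X (\<lambda>x. - f x) \<psi>}"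
    then obtain \<psi> where p: "t = - \<psi> y" "(real k)-lipschitz_on X \<psi>" "cls_le small X (\<lambda>x. - f x) \<psi>" by auto
    have "(real k)-lipschitz_on X (\<lambda>x. - \<psi> x)" using p(2) by (auto simp: lipschitz_on_def dist_real_def)
    moreover have "cls_le small X (\<lambda>x. - \<psi> x) f"
    proof -
      have "{x \<in> X. \<not> - \<psi> x \<le> f x} = {x \<in> X. \<not> - f x \<le> \<psi> x}" by auto
      then show ?thesis using p(3) by (simp add: cls_le_def)
    qed
    ultimately show "t \<in> {\<phi> y | \<phi>. (real k)-lipschitz_on X \<phi> \<and> cls_le small X \<phi> f}"
      using p(1) by (intro CollectI exI[of _ "\<lambda>x. - \<psi> x"]) simp
  qed
  then show ?thesis unfolding lower_env_def upper_env_def Inf_real_def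
    by (simp add: image_image)
qed

lemma value_le_env:
  fixes \<phi> :: "'a::euclidean_space \<Rightarrow> 'a"
  assumes gs: "good_small small X" and X: "open X" and fb: "\<forall>z\<in>X. \<bar>\<phi> z \<bullet> \<xi>\<bar> \<le> M"
    and eta: "\<eta> \<in> cls_value X \<phi> y" and y: "y \<in> X"
  shows "\<eta> \<bullet> \<xi> \<le> upper_env small X k (\<lambda>z. \<phi> z \<bullet> \<xi>) y"
proof (rule env_props(4)[OF gs X fb y])
  fix \<psi> assume lip: "(real k)-lipschitz_on X \<psi>" and cl: "cls_le small X (\<lambda>z. \<phi> z \<bullet> \<xi>) \<psi>"
  show "\<eta> \<bullet> \<xi> \<le> \<psi> y"
  proof (rule ccontr)
    assume "\<not> \<eta> \<bullet> \<xi> \<le> \<psi> y"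
    define \<epsilon> where "\<epsilon> = (\<eta> \<bullet> \<xi> - \<psi> y) / (2 * (real k + 1))"
    have e0: "\<epsilon> > 0" using \<open>\<not> \<eta> \<bullet> \<xi> \<le> \<psi> y\<close> by (simp add: \<epsilon>_def)
    have mem: "\<eta> \<in> closure (convex hull (\<phi> ` (ball y \<epsilon> \<inter> cont_set X \<phi>)))"
      using eta e0 unfolding cls_value_def by auto
    define H where "H = {v. inner \<xi> v \<le> \<psi> y + real k * \<epsilon>}"
    have Hc: "closed H" "convex H" unfolding H_def
      by (auto intro: closed_halfspace_le convex_halfspace_le)
    have "\<phi> ` (ball y \<epsilon> \<inter> cont_set X \<phi>) \<subseteq> H"
    proof
      fix v assume "v \<in> \<phi> ` (ball y \<epsilon> \<inter> cont_set X \<phi>)"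
      then obtain w where w: "v = \<phi> w" "w \<in> ball y \<epsilon>" "w \<in> X" "continuous (at w within X) \<phi>"
        unfolding cont_set_def by auto
      have "continuous (at w within X) (\<lambda>z. \<phi> z \<bullet> \<xi>)"
        using w(4) by (intro continuous_intros)
      then have "\<phi> w \<bullet> \<xi> \<le> \<psi> w" using maj_cont[OF gs X lip cl w(3)] by simp
      also have "\<psi> w \<le> \<psi> y + real k * dist w y"
        using lipschitz_onD[OF lip w(3) y] by (simp add: dist_real_def)
      also have "real k * dist w y \<le> real k * \<epsilon>"
        using w(2) by (intro mult_left_mono) (auto simp: dist_commute)
      finally show "v \<in> H" unfolding H_def w(1) by (simp add: inner_commute)
    qed
    then have "convex hull (\<phi> ` (ball y \<epsilon> \<inter> cont_set X \<phi>)) \<subseteq> H"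
      using Hc(2) by (rule hull_minimal)
    then have "closure (convex hull (\<phi> ` (ball y \<epsilon> \<inter> cont_set X \<phi>))) \<subseteq> H"
      using Hc(1) by (rule closure_minimal)
    with mem have "\<eta> \<bullet> \<xi> \<le> \<psi> y + real k * \<epsilon>" unfolding H_def by (auto simp: inner_commute)
    moreover have "real k * \<epsilon> < \<eta> \<bullet> \<xi> - \<psi> y"
    proof -
      have "real k * \<epsilon> \<le> (real k + 1) * \<epsilon>" using e0 by simp
      also have "(real k + 1) * \<epsilon> = (\<eta> \<bullet> \<xi> - \<psi> y) / 2"
        unfolding \<epsilon>_def by (simp add: field_simps add_pos_nonneg)
      also have "\<dots> < \<eta> \<bullet> \<xi> - \<psi> y" using \<open>\<not> \<eta> \<bullet> \<xi> \<le> \<psi> y\<close> by simp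
      finally show ?thesis .
    qed
    ultimately show False by simp
  qed
qed

lemma graph_bound:
  fixes \<phi> :: "'a::euclidean_space \<Rightarrow> real"
  assumes "\<forall>z\<in>X. norm z \<le> B" "\<forall>z\<in>X. \<bar>\<phi> z\<bar> \<le> M"
  shows "graph_cl X \<phi> \<subseteq> cball 0 (B + M)"
  unfolding graph_cl_def
proof (rule closure_minimal)
  show "(\<lambda>x. (x, \<phi> x)) ` X \<subseteq> cball 0 (B + M)"
  proof
    fix p assume "p \<in> (\<lambda>x. (x, \<phi> x)) ` X"
    then obtain z where z: "z \<in> X" "p = (z, \<phi> z)" by auto
    have "norm (z, \<phi> z) \<le> norm z + norm (\<phi> z)" by (rule norm_Pair_le)
    also have "\<dots> \<le> B + M" using assms z by (intro add_mono) auto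
    finally show "p \<in> cball 0 (B + M)" using z by simp
  qed
qed simp

lemma infdist_cball_bound:
  fixes p :: "'a::real_normed_vector"
  assumes "p \<in> cball 0 R" "T \<subseteq> cball 0 R" "t \<in> T"
  shows "infdist p T \<le> 2 * R"
proof -
  have "infdist p T \<le> dist p t" by (rule infdist_le[OF assms(3)])
  also have "\<dots> \<le> norm p + norm t" by (simp add: dist_norm norm_triangle_ineq4)
  also have "\<dots> \<le> 2 * R" using assms by auto
  finally show ?thesis .
qed

lemma half_le_aux: "(x::real) \<le> x / 2 \<Longrightarrow> x \<le> 0" by linarith

lemma hd_pointwise:
  fixes \<phi>1 \<phi>2 :: "'a::euclidean_space \<Rightarrow> real"
  assumes B: "\<forall>z\<in>X. norm z \<le> B" and b1: "\<forall>z\<in>X. \<bar>\<phi>1 z\<bar> \<le> M" and b2: "\<forall>z\<in>X. \<bar>\<phi>2 z\<bar> \<le> M"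
    and lip: "(real k)-lipschitz_on X \<phi>2" and y: "y \<in> X"
  shows "\<phi>1 y \<le> \<phi>2 y + (real k + 1) * hd X \<phi>1 \<phi>2"
proof -
  let ?G1 = "graph_cl X \<phi>1" and ?G2 = "graph_cl X \<phi>2"
  let ?d = "hd X \<phi>1 \<phi>2"
  define p where "p = (y, \<phi>1 y)"
  have pG: "p \<in> ?G1" unfolding p_def graph_cl_def using y closure_subset by fastforce
  have tG: "(y, \<phi>2 y) \<in> ?G2" unfolding graph_cl_def using y closure_subset by fastforce
  have g1: "?G1 \<subseteq> cball 0 (B + M)" and g2: "?G2 \<subseteq> cball 0 (B + M)"
    using graph_bound[OF B b1] graph_bound[OF B b2] by auto
  have bdd: "bdd_above ((\<lambda>q. infdist q ?G2) ` ?G1)"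
    using infdist_cball_bound[OF _ g2 tG] g1 by (intro bdd_aboveI[of _ "2 * (B + M)"]) auto
  have "infdist p ?G2 \<le> (SUP q\<in>?G1. infdist q ?G2)" by (rule cSUP_upper[OF pG bdd])
  also have "\<dots> \<le> ?d" unfolding hd_def hausdist_def by simp
  finally have h1: "infdist p ?G2 \<le> ?d" .
  have main: "\<phi>1 y \<le> \<phi>2 y + (real k + 1) * ?d + (real k + 1) * (2 * \<delta>)" if d0: "\<delta> > 0" for \<delta>
  proof -
    have "infdist p ?G2 < ?d + \<delta>" using h1 d0 by simp
    moreover have ne: "?G2 \<noteq> {}" using tG by auto
    moreover have "bdd_below (dist p ` ?G2)" by (intro bdd_belowI[of _ 0]) auto
    ultimately obtain t where t: "t \<in> ?G2" "dist p t < ?d + \<delta>"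
      unfolding infdist_notempty[OF ne] by (auto simp: cINF_less_iff[OF ne])
    obtain g where g: "g \<in> (\<lambda>x. (x, \<phi>2 x)) ` X" "dist g t < \<delta>"
      using t(1) d0 unfolding graph_cl_def closure_approachable by blast
    then obtain z where z: "z \<in> X" "g = (z, \<phi>2 z)" by auto
    have dpg: "dist p g < ?d + 2 * \<delta>"
      using dist_triangle[of p g t] t(2) g(2) by (simp add: dist_commute)
    have "dist y z \<le> dist p g" using dist_fst_le[of p g] unfolding p_def z(2) by simp
    moreover have "dist (\<phi>1 y) (\<phi>2 z) \<le> dist p g" using dist_snd_le[of p g] unfolding p_def z(2) by simp
    moreover have "dist (\<phi>2 z) (\<phi>2 y) \<le> real k * dist z y" using lipschitz_onD[OF lip z(1) y] .
    ultimately have "\<phi>1 y \<le> \<phi>2 y + real k * (?d + 2 * \<delta>) + (?d + 2 * \<delta>)"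
      using dpg
    proof -
      assume a: "dist y z \<le> dist p g" "dist (\<phi>1 y) (\<phi>2 z) \<le> dist p g"
        "dist (\<phi>2 z) (\<phi>2 y) \<le> real k * dist z y" "dist p g < ?d + 2 * \<delta>"
      have "real k * dist z y \<le> real k * (?d + 2 * \<delta>)"
        using a(1,4) by (intro mult_left_mono) (auto simp: dist_commute)
      then show ?thesis using a(2,3,4) by (auto simp: dist_real_def abs_le_iff)
    qed
    then show ?thesis by (simp add: algebra_simps)
  qed
  show ?thesis
  proof (rule ccontr)
    assume nt: "\<not> \<phi>1 y \<le> \<phi>2 y + (real k + 1) * ?d"
    define \<delta> where "\<delta> = (\<phi>1 y - \<phi>2 y - (real k + 1) * ?d) / (4 * (real k + 1))"
    have "\<delta> > 0" using nt by (simp add: \<delta>_def add_pos_nonneg)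
    from main[OF this] have "\<phi>1 y - \<phi>2 y - (real k + 1) * ?d \<le> (real k + 1) * (2 * \<delta>)" by simp
    also have "\<dots> = (\<phi>1 y - \<phi>2 y - (real k + 1) * ?d) / 2"
      unfolding \<delta>_def by (simp add: field_simps add_pos_nonneg)
    finally have "\<phi>1 y - \<phi>2 y - (real k + 1) * ?d \<le> 0"
      using half_le_aux by blast
    then show False using nt by linarith
  qed
qed

lemma env_abs:
  fixes f :: "'a::euclidean_space \<Rightarrow> real"
  assumes gs: "good_small small X" and X: "open X" and fb: "\<forall>z\<in>X. \<bar>f z\<bar> \<le> M" and z: "z \<in> X"
  shows "\<bar>upper_env small X k f z\<bar> \<le> M" "\<bar>lower_env small X k f z\<bar> \<le> M"
proof -
  show "\<bar>upper_env small X k f z\<bar> \<le> M" using env_props(1)[OF gs X fb z] .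
  have fb': "\<forall>z\<in>X. \<bar>- f z\<bar> \<le> M" using fb by simp
  show "\<bar>lower_env small X k f z\<bar> \<le> M"
    unfolding lower_env_neg using env_props(1)[OF gs X fb' z] by simp
qed

lemma hd_bound:
  fixes \<phi>1 \<phi>2 :: "'a::euclidean_space \<Rightarrow> real"
  assumes ne: "X \<noteq> {}" and B: "\<forall>z\<in>X. norm z \<le> B" and b1: "\<forall>z\<in>X. \<bar>\<phi>1 z\<bar> \<le> M" and b2: "\<forall>z\<in>X. \<bar>\<phi>2 z\<bar> \<le> M"
  shows "hd X \<phi>1 \<phi>2 \<le> 2 * (B + M)"
proof -
  let ?G1 = "graph_cl X \<phi>1" and ?G2 = "graph_cl X \<phi>2"
  have g1: "?G1 \<subseteq> cball 0 (B + M)" and g2: "?G2 \<subseteq> cball 0 (B + M)"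
    using graph_bound[OF B b1] graph_bound[OF B b2] by auto
  obtain z where z: "z \<in> X" using ne by auto
  have t1: "(z, \<phi>1 z) \<in> ?G1" unfolding graph_cl_def using z closure_subset by fastforce
  have t2: "(z, \<phi>2 z) \<in> ?G2" unfolding graph_cl_def using z closure_subset by fastforce
  have a: "(SUP q\<in>?G1. infdist q ?G2) \<le> 2 * (B + M)"
  proof (rule cSUP_least)
    show "?G1 \<noteq> {}" using t1 by auto
    fix q assume q: "q \<in> ?G1" then show "infdist q ?G2 \<le> 2 * (B + M)"
      using infdist_cball_bound[OF subsetD[OF g1 q] g2 t2] by simp
  qed
  have b: "(SUP q\<in>?G2. infdist q ?G1) \<le> 2 * (B + M)"
  proof (rule cSUP_least)
    show "?G2 \<noteq> {}" using t2 by auto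
    fix q assume q: "q \<in> ?G2" then show "infdist q ?G1 \<le> 2 * (B + M)"
      using infdist_cball_bound[OF subsetD[OF g2 q] g1 t1] by simp
  qed
  show ?thesis unfolding hd_def hausdist_def using a b by simp
qed

lemma dlt_props:
  fixes \<phi>1 \<phi>2 :: "'a::euclidean_space \<Rightarrow> real"
  assumes X: "open X" "bounded X" and b1: "\<forall>z\<in>X. \<bar>\<phi>1 z\<bar> \<le> M" and b2: "\<forall>z\<in>X. \<bar>\<phi>2 z\<bar> \<le> M"
  shows "hd X \<phi>1 \<phi>2 \<le> dlt X \<phi>1 \<phi>2"
    and "dlt X \<phi>1 \<phi>2 \<le> hd X \<phi>1 \<phi>2 + integral\<^sup>L lebesgue (\<lambda>x. indicator X x *\<^sub>R (2 * M))"
proof -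
  have I: "(LINT x:X|lebesgue. \<bar>\<phi>1 x - \<phi>2 x\<bar>) = integral\<^sup>L lebesgue (\<lambda>x. indicator X x *\<^sub>R \<bar>\<phi>1 x - \<phi>2 x\<bar>)"
    by (simp add: set_lebesgue_integral_def)
  have "0 \<le> integral\<^sup>L lebesgue (\<lambda>x. indicator X x *\<^sub>R \<bar>\<phi>1 x - \<phi>2 x\<bar>)"
    by (rule integral_nonneg_AE) (auto simp: indicator_def)
  then show "hd X \<phi>1 \<phi>2 \<le> dlt X \<phi>1 \<phi>2" unfolding dlt_def I by simp
  have Xs: "X \<in> sets lebesgue" by (rule sets_completionI_sets) (simp add: borel_open X(1))
  have "X \<in> lmeasurable" by (rule bounded_set_imp_lmeasurable[OF X(2) Xs])
  then have Xm: "emeasure lebesgue X < \<infinity>" unfolding fmeasurable_def by blast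
  have "integral\<^sup>L lebesgue (\<lambda>x. indicator X x *\<^sub>R \<bar>\<phi>1 x - \<phi>2 x\<bar>) \<le> integral\<^sup>L lebesgue (\<lambda>x. indicator X x *\<^sub>R (2 * M))"
  proof (rule integral_mono_AE')
    show "integrable lebesgue (\<lambda>x. indicator X x *\<^sub>R (2 * M))" using Xs Xm by (rule integrable_indicator)
    have "indicator X x *\<^sub>R \<bar>\<phi>1 x - \<phi>2 x\<bar> \<le> indicator X x *\<^sub>R (2 * M)" for x
    proof (cases "x \<in> X")
      case True
      then have "\<bar>\<phi>1 x\<bar> \<le> M" "\<bar>\<phi>2 x\<bar> \<le> M" using b1 b2 by auto
      then have "\<bar>\<phi>1 x - \<phi>2 x\<bar> \<le> 2 * M" by linarith
      then show ?thesis using True by (simp add: indicator_def)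
    qed (simp add: indicator_def)
    then show "AE x in lebesgue. indicator X x *\<^sub>R \<bar>\<phi>1 x - \<phi>2 x\<bar> \<le> indicator X x *\<^sub>R (2 * M)" by simp
    have "0 \<le> indicator X x *\<^sub>R (2 * M)" for x
    proof (cases "x \<in> X")
      case True then show ?thesis using b1 by (auto simp: indicator_def)
    qed (simp add: indicator_def)
    then show "AE x in lebesgue. 0 \<le> indicator X x *\<^sub>R (2 * M)" by simp
  qed
  then show "dlt X \<phi>1 \<phi>2 \<le> hd X \<phi>1 \<phi>2 + integral\<^sup>L lebesgue (\<lambda>x. indicator X x *\<^sub>R (2 * M))"
    unfolding dlt_def I by simp
qed

lemma inner_bound:
  fixes H :: "'a::euclidean_space \<Rightarrow> 'a"
  assumes "\<forall>z\<in>X. norm (H z) \<le> M" "\<zeta> \<in> sphere 0 1"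
  shows "\<forall>z\<in>X. \<bar>H z \<bullet> \<zeta>\<bar> \<le> M"
proof
  fix z assume z: "z \<in> X"
  have "\<bar>H z \<bullet> \<zeta>\<bar> \<le> norm (H z) * norm \<zeta>" by (rule Cauchy_Schwarz_ineq2)
  also have "\<dots> = norm (H z)" using assms(2) by simp
  finally show "\<bar>H z \<bullet> \<zeta>\<bar> \<le> M" using assms(1) z by auto
qed

lemma s_ge:
  fixes F G :: "'a::euclidean_space \<Rightarrow> 'a"
  assumes X: "open X" and ne: "X \<noteq> {}" and B: "\<forall>z\<in>X. norm z \<le> B"
    and MF: "\<forall>z\<in>X. norm (F z) \<le> M" and MG: "\<forall>z\<in>X. norm (G z) \<le> M"
    and xi: "\<xi> \<in> sphere 0 1" and n: "1 \<le> n"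
  shows "hd X (upper_env cm_small X n (\<lambda>y. F y \<bullet> \<xi>)) (upper_env cm_small X n (\<lambda>y. G y \<bullet> \<xi>)) \<le> s_vec X F G"
proof -
  define Q where "Q \<zeta> m = max (hd X (lower_env cm_small X m (\<lambda>y. F y \<bullet> \<zeta>)) (lower_env cm_small X m (\<lambda>y. G y \<bullet> \<zeta>)))
          (hd X (upper_env cm_small X m (\<lambda>y. F y \<bullet> \<zeta>)) (upper_env cm_small X m (\<lambda>y. G y \<bullet> \<zeta>)))" for \<zeta> m
  have Qb: "Q \<zeta> m \<le> 2 * (B + M)" if z: "\<zeta> \<in> sphere 0 1" for \<zeta> m
  proof -
    have f: "\<forall>z\<in>X. \<bar>F z \<bullet> \<zeta>\<bar> \<le> M" and g: "\<forall>z\<in>X. \<bar>G z \<bullet> \<zeta>\<bar> \<le> M"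
      using inner_bound[OF MF z] inner_bound[OF MG z] by auto
    note ea = env_abs[OF good_cm X]
    show ?thesis unfolding Q_def
      using hd_bound[OF ne B, of "lower_env cm_small X m (\<lambda>y. F y \<bullet> \<zeta>)" M "lower_env cm_small X m (\<lambda>y. G y \<bullet> \<zeta>)"]
        hd_bound[OF ne B, of "upper_env cm_small X m (\<lambda>y. F y \<bullet> \<zeta>)" M "upper_env cm_small X m (\<lambda>y. G y \<bullet> \<zeta>)"]
        ea[OF f] ea[OF g] by auto
  qed
  have sr: "s_real X (\<lambda>y. F y \<bullet> \<zeta>) (\<lambda>y. G y \<bullet> \<zeta>) = (SUP m\<in>{1..}. Q \<zeta> m)" for \<zeta>
    unfolding s_real_def Q_def by simp
  have srb: "s_real X (\<lambda>y. F y \<bullet> \<zeta>) (\<lambda>y. G y \<bullet> \<zeta>) \<le> 2 * (B + M)" if "\<zeta> \<in> sphere 0 1" for \<zeta>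
    unfolding sr by (rule cSUP_least) (use Qb that in auto)
  have "hd X (upper_env cm_small X n (\<lambda>y. F y \<bullet> \<xi>)) (upper_env cm_small X n (\<lambda>y. G y \<bullet> \<xi>)) \<le> Q \<xi> n"
    by (simp add: Q_def)
  also have "Q \<xi> n \<le> (SUP m\<in>{1..}. Q \<xi> m)"
    by (rule cSUP_upper) (use n Qb[OF xi] in \<open>auto intro!: bdd_aboveI2\<close>)
  also have "\<dots> = s_real X (\<lambda>y. F y \<bullet> \<xi>) (\<lambda>y. G y \<bullet> \<xi>)" by (rule sr[symmetric])
  also have "\<dots> \<le> s_vec X F G" unfolding s_vec_def
    by (rule cSUP_upper[OF xi]) (use srb in \<open>auto intro!: bdd_aboveI2\<close>)
  finally show ?thesis .
qed

lemma r_ge: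
  fixes F G :: "'a::euclidean_space \<Rightarrow> 'a"
  assumes X: "open X" "bounded X" and ne: "X \<noteq> {}" and B: "\<forall>z\<in>X. norm z \<le> B"
    and MF: "\<forall>z\<in>X. norm (F z) \<le> M" and MG: "\<forall>z\<in>X. norm (G z) \<le> M"
    and xi: "\<xi> \<in> sphere 0 1" and n: "1 \<le> n"
  shows "hd X (upper_env ae_small X n (\<lambda>y. F y \<bullet> \<xi>)) (upper_env ae_small X n (\<lambda>y. G y \<bullet> \<xi>)) \<le> r_vec X F G"
proof -
  define I where "I = integral\<^sup>L lebesgue (\<lambda>x. indicator X x *\<^sub>R (2 * M))"
  define Q where "Q \<zeta> m = max (dlt X (lower_env ae_small X m (\<lambda>y. F y \<bullet> \<zeta>)) (lower_env ae_small X m (\<lambda>y. G y \<bullet> \<zeta>)))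
          (dlt X (upper_env ae_small X m (\<lambda>y. F y \<bullet> \<zeta>)) (upper_env ae_small X m (\<lambda>y. G y \<bullet> \<zeta>)))" for \<zeta> m
  have Qb: "Q \<zeta> m \<le> 2 * (B + M) + I" if z: "\<zeta> \<in> sphere 0 1" for \<zeta> m
  proof -
    have f: "\<forall>z\<in>X. \<bar>F z \<bullet> \<zeta>\<bar> \<le> M" and g: "\<forall>z\<in>X. \<bar>G z \<bullet> \<zeta>\<bar> \<le> M"
      using inner_bound[OF MF z] inner_bound[OF MG z] by auto
    note ea = env_abs[OF good_ae X(1)]
    have l1: "\<forall>z\<in>X. \<bar>lower_env ae_small X m (\<lambda>y. F y \<bullet> \<zeta>) z\<bar> \<le> M" using ea(2)[OF f] by blast
    have l2: "\<forall>z\<in>X. \<bar>lower_env ae_small X m (\<lambda>y. G y \<bullet> \<zeta>) z\<bar> \<le> M" using ea(2)[OF g] by blast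
    have u1: "\<forall>z\<in>X. \<bar>upper_env ae_small X m (\<lambda>y. F y \<bullet> \<zeta>) z\<bar> \<le> M" using ea(1)[OF f] by blast
    have u2: "\<forall>z\<in>X. \<bar>upper_env ae_small X m (\<lambda>y. G y \<bullet> \<zeta>) z\<bar> \<le> M" using ea(1)[OF g] by blast
    show ?thesis unfolding Q_def I_def
      using hd_bound[OF ne B l1 l2] hd_bound[OF ne B u1 u2] dlt_props(2)[OF X l1 l2] dlt_props(2)[OF X u1 u2]
      by auto
  qed
  have hdle: "hd X (upper_env ae_small X n (\<lambda>y. F y \<bullet> \<xi>)) (upper_env ae_small X n (\<lambda>y. G y \<bullet> \<xi>)) \<le> Q \<xi> n"
  proof -
    have f: "\<forall>z\<in>X. \<bar>F z \<bullet> \<xi>\<bar> \<le> M" and g: "\<forall>z\<in>X. \<bar>G z \<bullet> \<xi>\<bar> \<le> M"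
      using inner_bound[OF MF xi] inner_bound[OF MG xi] by auto
    note ea = env_abs[OF good_ae X(1)]
    have u1: "\<forall>z\<in>X. \<bar>upper_env ae_small X n (\<lambda>y. F y \<bullet> \<xi>) z\<bar> \<le> M" using ea(1)[OF f] by blast
    have u2: "\<forall>z\<in>X. \<bar>upper_env ae_small X n (\<lambda>y. G y \<bullet> \<xi>) z\<bar> \<le> M" using ea(1)[OF g] by blast
    show ?thesis unfolding Q_def using dlt_props(1)[OF X u1 u2] by simp
  qed
  have sr: "r_real X (\<lambda>y. F y \<bullet> \<zeta>) (\<lambda>y. G y \<bullet> \<zeta>) = (SUP m\<in>{1..}. Q \<zeta> m)" for \<zeta>
    unfolding r_real_def Q_def by simp
  have srb: "r_real X (\<lambda>y. F y \<bullet> \<zeta>) (\<lambda>y. G y \<bullet> \<zeta>) \<le> 2 * (B + M) + I" if "\<zeta> \<in> sphere 0 1" for \<zeta>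
    unfolding sr by (rule cSUP_least) (use Qb that in auto)
  note hdle
  also have "Q \<xi> n \<le> (SUP m\<in>{1..}. Q \<xi> m)"
    by (rule cSUP_upper) (use n Qb[OF xi] in \<open>auto intro!: bdd_aboveI2\<close>)
  also have "\<dots> = r_real X (\<lambda>y. F y \<bullet> \<xi>) (\<lambda>y. G y \<bullet> \<xi>)" by (rule sr[symmetric])
  also have "\<dots> \<le> r_vec X F G" unfolding r_vec_def
    by (rule cSUP_upper[OF xi]) (use srb in \<open>auto intro!: bdd_aboveI2\<close>)
  finally show ?thesis .
qed

lemma main_generic:
  fixes F :: "nat \<Rightarrow> 'a::euclidean_space \<Rightarrow> 'a" and F0 :: "'a \<Rightarrow> 'a"
  assumes gs: "good_small small X" and X: "open X" and B: "\<forall>z\<in>X. norm z \<le> B"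
    and C0: "small X (X - cont_set X F0)"
    and bF: "\<And>k. bounded (F k ` X)" and bF0: "bounded (F0 ` X)"
    and D: "\<And>k \<xi> n. \<xi> \<in> sphere 0 1 \<Longrightarrow> 1 \<le> n \<Longrightarrow>
       hd X (upper_env small X n (\<lambda>y. F k y \<bullet> \<xi>)) (upper_env small X n (\<lambda>y. F0 y \<bullet> \<xi>)) \<le> d k"
    and d: "d \<longlonglongrightarrow> 0"
    and xsX: "\<And>k. xs k \<in> X" and x: "x \<in> X" and xs: "xs \<longlonglongrightarrow> x" and etas: "\<eta>s \<longlonglongrightarrow> \<eta>"
    and etav: "\<And>k. \<eta>s k \<in> cls_value X (F k) (xs k)"
  shows "\<eta> \<in> cls_value X F0 x"
proof (rule ccontr)
  assume nv: "\<eta> \<notin> cls_value X F0 x"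
  then obtain \<epsilon>0 where e0: "\<epsilon>0 > 0" and nK: "\<eta> \<notin> closure (convex hull (F0 ` (ball x \<epsilon>0 \<inter> cont_set X F0)))"
    unfolding cls_value_def by auto
  define K where "K = closure (convex hull (F0 ` (ball x \<epsilon>0 \<inter> cont_set X F0)))"
  have Kc: "convex K" "closed K" unfolding K_def by (auto intro: convex_closure convex_convex_hull)
  obtain a b where ab: "inner a \<eta> < b" "\<forall>v\<in>K. b < inner a v"
    using separating_hyperplane_closed_point[OF Kc nK[folded K_def]] by blast
  have s2: "\<And>A B. small X A \<Longrightarrow> B \<subseteq> A \<Longrightarrow> small X B" using gs unfolding good_small_def by blast
  obtain w where w: "w \<in> ball x \<epsilon>0" "w \<in> cont_set X F0"
  proof -
    have "\<not> ball x \<epsilon>0 \<inter> X \<subseteq> X - cont_set X F0"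
    proof (rule gs_s3[OF gs C0])
      have "x \<in> ball x \<epsilon>0 \<inter> X" using x e0 by simp
      then show "ball x \<epsilon>0 \<inter> X \<noteq> {}" by blast
    qed (use X in auto)
    then show ?thesis using that by blast
  qed
  have FwK: "F0 w \<in> K" unfolding K_def using w
    by (meson IntI closure_subset hull_subset image_eqI subsetD)
  have a0: "a \<noteq> 0" using ab FwK by auto
  then have na: "norm a > 0" by simp
  define \<xi> where "\<xi> = - (1 / norm a) *\<^sub>R a"
  define \<beta> where "\<beta> = - b / norm a"
  have xi: "\<xi> \<in> sphere 0 1" using a0 by (simp add: \<xi>_def)
  have ip: "v \<bullet> \<xi> = - (a \<bullet> v) / norm a" for v
    by (simp add: \<xi>_def inner_commute)
  have Kb: "v \<bullet> \<xi> < \<beta>" if "v \<in> K" for v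
  proof -
    have "b < a \<bullet> v" using ab(2) that by auto
    then show ?thesis unfolding ip \<beta>_def using na by (simp add: divide_strict_right_mono)
  qed
  have eb: "\<beta> < \<eta> \<bullet> \<xi>"
    unfolding ip \<beta>_def using na ab(1) by (simp add: divide_strict_right_mono)
  obtain M0 where M0: "\<forall>z\<in>X. norm (F0 z) \<le> M0" using bF0 unfolding bounded_iff by auto
  let ?f0 = "\<lambda>y. F0 y \<bullet> \<xi>"
  have f0b: "\<forall>z\<in>X. \<bar>F0 z \<bullet> \<xi>\<bar> \<le> M0" by (rule inner_bound[OF M0 xi])
  define n where "n = nat \<lceil>(M0 - \<beta>) / \<epsilon>0\<rceil> + 1"
  have n1: "1 \<le> n" by (simp add: n_def)
  have "(M0 - \<beta>) / \<epsilon>0 \<le> real n" unfolding n_def by linarith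
  then have nbig: "M0 \<le> \<beta> + real n * \<epsilon>0" using e0 by (simp add: pos_divide_le_eq)
  define \<psi> where "\<psi> y = \<beta> + real n * dist y x" for y
  have lip: "(real n)-lipschitz_on X \<psi>"
  proof (rule lipschitz_onI)
    fix y z assume "y \<in> X" "z \<in> X"
    have "\<bar>dist y x - dist z x\<bar> \<le> dist y z"
      using dist_triangle[of y x z] dist_triangle[of z x y] by (simp add: dist_commute abs_le_iff)
    then have "real n * \<bar>dist y x - dist z x\<bar> \<le> real n * dist y z" by (intro mult_left_mono) auto
    then show "dist (\<psi> y) (\<psi> z) \<le> real n * dist y z"
      by (simp add: \<psi>_def dist_real_def right_diff_distrib[symmetric] abs_mult)
  qed simp
  have cl: "cls_le small X ?f0 \<psi>"
    unfolding cls_le_def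
  proof (rule s2[OF C0])
    show "{y \<in> X. \<not> ?f0 y \<le> \<psi> y} \<subseteq> X - cont_set X F0"
    proof
      fix y assume y: "y \<in> {y \<in> X. \<not> ?f0 y \<le> \<psi> y}"
      show "y \<in> X - cont_set X F0"
      proof (rule ccontr)
        assume "y \<notin> X - cont_set X F0"
        then have yC: "y \<in> cont_set X F0" using y by auto
        have "?f0 y \<le> \<psi> y"
        proof (cases "dist y x < \<epsilon>0")
          case True
          then have "F0 y \<in> K" unfolding K_def using yC
            by (metis IntI closure_subset dist_commute hull_subset image_eqI mem_ball subsetD)
          then have "?f0 y < \<beta>" by (rule Kb)
          moreover have "0 \<le> real n * dist y x" by simp
          ultimately show ?thesis unfolding \<psi>_def by linarith
        next
          case False
          have "?f0 y \<le> M0" using f0b y by auto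
          also have "M0 \<le> \<beta> + real n * \<epsilon>0" by (rule nbig)
          also have "\<dots> \<le> \<psi> y" using False unfolding \<psi>_def by (intro add_left_mono mult_left_mono) auto
          finally show ?thesis .
        qed
        then show False using y by auto
      qed
    qed
  qed
  let ?U0 = "upper_env small X n ?f0"
  have U0x: "?U0 x \<le> \<beta>" using env_props(3)[OF gs X f0b lip cl x] by (simp add: \<psi>_def)
  have U0lip: "(real n)-lipschitz_on X ?U0" by (rule env_props(2)[OF gs X f0b])
  have U0b: "\<forall>z\<in>X. \<bar>?U0 z\<bar> \<le> M0" using env_props(1)[OF gs X f0b] by blast
  have bound: "\<eta>s k \<bullet> \<xi> \<le> ?U0 x + real n * dist (xs k) x + (real n + 1) * d k" for k
  proof -
    obtain Mk where Mk: "\<forall>z\<in>X. norm (F k z) \<le> Mk" using bF[of k] unfolding bounded_iff by auto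
    have fkb: "\<forall>z\<in>X. \<bar>F k z \<bullet> \<xi>\<bar> \<le> Mk" by (rule inner_bound[OF Mk xi])
    let ?Uk = "upper_env small X n (\<lambda>y. F k y \<bullet> \<xi>)"
    have e1: "\<eta>s k \<bullet> \<xi> \<le> ?Uk (xs k)" by (rule value_le_env[OF gs X fkb etav xsX])
    have "\<forall>z\<in>X. \<bar>?Uk z\<bar> \<le> Mk" using env_props(1)[OF gs X fkb] by blast
    then have Ukb: "\<forall>z\<in>X. \<bar>?Uk z\<bar> \<le> max Mk M0" by (meson order_trans max.cobounded1)
    have U0b': "\<forall>z\<in>X. \<bar>?U0 z\<bar> \<le> max Mk M0" using U0b by (meson order_trans max.cobounded2)
    have e2: "?Uk (xs k) \<le> ?U0 (xs k) + (real n + 1) * hd X ?Uk ?U0"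
      by (rule hd_pointwise[OF B Ukb U0b' U0lip xsX])
    have "hd X ?Uk ?U0 \<le> d k" by (rule D[OF xi n1])
    then have e3: "(real n + 1) * hd X ?Uk ?U0 \<le> (real n + 1) * d k" by (intro mult_left_mono) auto
    have "dist (?U0 (xs k)) (?U0 x) \<le> real n * dist (xs k) x" by (rule lipschitz_onD[OF U0lip xsX x])
    then have e4: "?U0 (xs k) \<le> ?U0 x + real n * dist (xs k) x" by (simp add: dist_real_def abs_le_iff)
    show ?thesis using e1 e2 e3 e4 by linarith
  qed
  have l1: "(\<lambda>k. \<eta>s k \<bullet> \<xi>) \<longlonglongrightarrow> \<eta> \<bullet> \<xi>" by (intro tendsto_intros etas)
  have "(\<lambda>k. ?U0 x + real n * dist (xs k) x + (real n + 1) * d k) \<longlonglongrightarrow> ?U0 x + real n * dist x x + (real n + 1) * 0"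
    by (intro tendsto_intros xs d)
  then have l2: "(\<lambda>k. ?U0 x + real n * dist (xs k) x + (real n + 1) * d k) \<longlonglongrightarrow> ?U0 x" by simp
  have "\<eta> \<bullet> \<xi> \<le> ?U0 x"
    by (rule tendsto_le[OF trivial_limit_sequentially l2 l1]) (simp add: bound)
  then show False using U0x eb by linarith
qed

theorem proposition2p4:
  fixes X :: "'a::euclidean_space set"
  assumes "open X" and "bounded X" and "X \<noteq> {}"
  shows "(\<forall>(F :: nat \<Rightarrow> 'a \<Rightarrow> 'a) F0 xs x \<eta>s \<eta>.
            (\<forall>k. in_Ccm X (F k)) \<and> in_Ccm X F0 \<and> (\<lambda>k. s_vec X (F k) F0) \<longlonglongrightarrow> 0 \<and>
            (\<forall>k. xs k \<in> X) \<and> x \<in> X \<and> xs \<longlonglongrightarrow> x \<and> \<eta>s \<longlonglongrightarrow> \<eta> \<and>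
            (\<forall>k. \<eta>s k \<in> cls_value X (F k) (xs k))
            \<longrightarrow> \<eta> \<in> cls_value X F0 x)
       \<and> (\<forall>(F :: nat \<Rightarrow> 'a \<Rightarrow> 'a) F0 xs x \<eta>s \<eta>.
            (\<forall>k. in_Cae X (F k)) \<and> in_Cae X F0 \<and> (\<lambda>k. r_vec X (F k) F0) \<longlonglongrightarrow> 0 \<and>
            (\<forall>k. xs k \<in> X) \<and> x \<in> X \<and> xs \<longlonglongrightarrow> x \<and> \<eta>s \<longlonglongrightarrow> \<eta> \<and>
            (\<forall>k. \<eta>s k \<in> cls_value X (F k) (xs k))
            \<longrightarrow> \<eta> \<in> cls_value X F0 x)"
proof -
  obtain B where B: "\<forall>z\<in>X. norm z \<le> B" using assms(2) unfolding bounded_iff by auto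
  have part1: "\<eta> \<in> cls_value X F0 x"
    if h: "(\<forall>k. in_Ccm X (F k)) \<and> in_Ccm X F0 \<and> (\<lambda>k. s_vec X (F k) F0) \<longlonglongrightarrow> 0 \<and>
            (\<forall>k. xs k \<in> X) \<and> x \<in> X \<and> xs \<longlonglongrightarrow> x \<and> \<eta>s \<longlonglongrightarrow> \<eta> \<and>
            (\<forall>k. \<eta>s k \<in> cls_value X (F k) (xs k))"
    for F :: "nat \<Rightarrow> 'a \<Rightarrow> 'a" and F0 xs x \<eta>s \<eta>
  proof -
    have bF: "\<And>k. bounded (F k ` X)" using h unfolding in_Ccm_def by blast
    have bF0: "bounded (F0 ` X)" using h unfolding in_Ccm_def by blast
    have C0: "cm_small X (X - cont_set X F0)" using h unfolding in_Ccm_def comeager_def by blast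
    show ?thesis
    proof (rule main_generic[OF good_cm assms(1) B C0 bF bF0, where xs=xs and \<eta>s=\<eta>s and d="\<lambda>k. s_vec X (F k) F0"])
      fix k and \<xi> :: 'a and n :: nat assume xi: "\<xi> \<in> sphere 0 1" and n: "1 \<le> n"
      obtain Mk where Mk: "\<forall>z\<in>X. norm (F k z) \<le> Mk" using bF[of k] unfolding bounded_iff by auto
      obtain M0 where M0: "\<forall>z\<in>X. norm (F0 z) \<le> M0" using bF0 unfolding bounded_iff by auto
      have Mk': "\<forall>z\<in>X. norm (F k z) \<le> max Mk M0" using Mk by (meson order_trans max.cobounded1)
      have M0': "\<forall>z\<in>X. norm (F0 z) \<le> max Mk M0" using M0 by (meson order_trans max.cobounded2)
      show "hd X (upper_env cm_small X n (\<lambda>y. F k y \<bullet> \<xi>)) (upper_env cm_small X n (\<lambda>y. F0 y \<bullet> \<xi>))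
            \<le> s_vec X (F k) F0"
        by (rule s_ge[OF assms(1) assms(3) B Mk' M0' xi n])
    qed (use h in auto)
  qed
  have part2: "\<eta> \<in> cls_value X F0 x"
    if h: "(\<forall>k. in_Cae X (F k)) \<and> in_Cae X F0 \<and> (\<lambda>k. r_vec X (F k) F0) \<longlonglongrightarrow> 0 \<and>
            (\<forall>k. xs k \<in> X) \<and> x \<in> X \<and> xs \<longlonglongrightarrow> x \<and> \<eta>s \<longlonglongrightarrow> \<eta> \<and>
            (\<forall>k. \<eta>s k \<in> cls_value X (F k) (xs k))"
    for F :: "nat \<Rightarrow> 'a \<Rightarrow> 'a" and F0 xs x \<eta>s \<eta>
  proof -
    have bF: "\<And>k. bounded (F k ` X)" using h unfolding in_Cae_def by blast
    have bF0: "bounded (F0 ` X)" using h unfolding in_Cae_def by blast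
    have C0: "ae_small X (X - cont_set X F0)" using h unfolding in_Cae_def by blast
    show ?thesis
    proof (rule main_generic[OF good_ae assms(1) B C0 bF bF0, where xs=xs and \<eta>s=\<eta>s and d="\<lambda>k. r_vec X (F k) F0"])
      fix k and \<xi> :: 'a and n :: nat assume xi: "\<xi> \<in> sphere 0 1" and n: "1 \<le> n"
      obtain Mk where Mk: "\<forall>z\<in>X. norm (F k z) \<le> Mk" using bF[of k] unfolding bounded_iff by auto
      obtain M0 where M0: "\<forall>z\<in>X. norm (F0 z) \<le> M0" using bF0 unfolding bounded_iff by auto
      have Mk': "\<forall>z\<in>X. norm (F k z) \<le> max Mk M0" using Mk by (meson order_trans max.cobounded1)
      have M0': "\<forall>z\<in>X. norm (F0 z) \<le> max Mk M0" using M0 by (meson order_trans max.cobounded2)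
      show "hd X (upper_env ae_small X n (\<lambda>y. F k y \<bullet> \<xi>)) (upper_env ae_small X n (\<lambda>y. F0 y \<bullet> \<xi>))
            \<le> r_vec X (F k) F0"
        by (rule r_ge[OF assms(1) assms(2) assms(3) B Mk' M0' xi n])
    qed (use h in auto)
  qed
  show ?thesis using part1 part2 by blast
qed

end
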